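(* In the setting of the context (with assumptions (A.1)–(A.3)), suppose the PMM generates infinite sequences $\{(u_k,v_k)\}$, $\{(z_k,w_k)\}$, $\{\gamma_k\}$, $\{\rho_k\}$, and define $x_k=z_{k-1}+\lambda w_{k-1}+\lambda(Cv_k-d)$, $b_k=d-Cv_k$, $y_k=x_k-\lambda(w_{k-1}-Mu_k)$, $a_k=-Mu_k$. Then: (a) there exist a solution $z^*$ of the dual problem $\max_z\varphi(z)$ and $w^*\in\mathbb{R}^n$ with $-w^*\in\partial h_1(z^* )$, $w^*\in\partial h_2(z^* )$, such that $(x_k,b_k)\to(z^*,w^* )$, $(y_k,-a_k)\to(z^*,w^* )$ and $(z_k,w_k)\to(z^*,w^* )$; (b) $Mu_k+Cv_k-d\to0$ and $x_k-y_k\to0$; (c) $\lim_{k\to\infty}f(u_k)+g(v_k)=p^*$, where $p^*$ is the optimal value of $\min\{f(u)+g(v):Mu+Cv=d\}$.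
   Context: Let $f:\mathbb{R}^{m_1}\to(-\infty,\infty]$, $g:\mathbb{R}^{m_2}\to(-\infty,\infty]$ be proper closed convex, $M:\mathbb{R}^{m_1}\to\mathbb{R}^n$, $C:\mathbb{R}^{m_2}\to\mathbb{R}^n$ linear, $d\in\mathbb{R}^n$; consider $\min\{f(u)+g(v):Mu+Cv=d\}$ with Lagrangian $L(u,v,z)=f(u)+g(v)+\langle Mu+Cv-d,z\rangle$, dual function $\varphi(z)=\inf_{(u,v)}L(u,v,z)$ and dual problem $\max_z\varphi(z)$. A saddle point is $(u^*,v^*,z^* )$ with $L(u^*,v^*,z^* )$ finite and $\min_{(u,v)}L(u,v,z^* )=L(u^*,v^*,z^* )=\max_zL(u^*,v^*,z)$. Let $h_1(z)=f^*(-M^*z)$, $h_2(z)=g^*(-C^*z)+\langle d,z\rangle$ ($^*$ on functions = Fenchel conjugate, on operators = adjoint). Standing assumptions: (A.1) $L$ has a saddle point; (A.2) $\mathrm{ri}(\mathrm{dom} f^* )\cap\mathrm{range}(M^* )\ne\emptyset$; (A.3) $\mathrm{ri}(\mathrm{dom} g^* )\cap\mathrm{range}(C^* )\ne\emptyset$. PMM: given $(z_0,w_0)\in\mathbb{R}^n\times\mathbb{R}^n$, $\lambda>0$, $\bar\rho\in[0,1)$, for $k=1,2,\dots$: (1) let $v_k$ be a minimizer of $g(v)+\langle z_{k-1}+\lambda w_{k-1},Cv-d\rangle+\frac\lambda2\|Cv-d\|^2$ and $u_k$ a minimizer of $f(u)+\langle z_{k-1}+\lambda(Cv_k-d),Mu\rangle+\frac\lambda2\|Mu\|^2$;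 (2) if $\|Mu_k+Cv_k-d\|+\|Mu_k-w_{k-1}\|=0$ stop; otherwise set $\gamma_k=\dfrac{\lambda\|Cv_k-d+w_{k-1}\|^2+\lambda\langle d-Cv_k-Mu_k,w_{k-1}-Mu_k\rangle}{\|Mu_k+Cv_k-d\|^2+\lambda^2\|Mu_k-w_{k-1}\|^2}$; (3) choose $\rho_k\in[1-\bar\rho,1+\bar\rho]$ and set $z_k=z_{k-1}+\rho_k\gamma_k(Mu_k+Cv_k-d)$, $w_k=w_{k-1}-\rho_k\gamma_k\lambda(w_{k-1}-Mu_k)$. *)

theory Defs
  imports "HOL-Analysis.Analysis"
begin

definition proper_fun :: "('a \<Rightarrow> ereal) \<Rightarrow> bool" where
  "proper_fun f \<longleftrightarrow> (\<forall>x. f x \<noteq> -\<infinity>) \<and> (\<exists>x. f x \<noteq> \<infinity>)"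

definition epigraph_e :: "('a \<Rightarrow> ereal) \<Rightarrow> ('a \<times> real) set" where
  "epigraph_e f = {(x, r). f x \<le> ereal r}"

definition convex_fun :: "('a::real_vector \<Rightarrow> ereal) \<Rightarrow> bool" where
  "convex_fun f \<longleftrightarrow> convex (epigraph_e f)"

definition closed_fun :: "('a::topological_space \<Rightarrow> ereal) \<Rightarrow> bool" where
  "closed_fun f \<longleftrightarrow> closed (epigraph_e f)"

definition edom :: "('a \<Rightarrow> ereal) \<Rightarrow> 'a set" where
  "edom f = {x. f x < \<infinity>}"

definition fconj :: "('a::real_inner \<Rightarrow> ereal) \<Rightarrow> 'a \<Rightarrow> ereal" where
  "fconj f y = (SUP x. ereal (y \<bullet> x) - f x)"

definition subdiff :: "('a::real_inner \<Rightarrow> ereal) \<Rightarrow> 'a \<Rightarrow> 'a set" where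
  "subdiff h z = {s. \<bar>h z\<bar> \<noteq> \<infinity> \<and> (\<forall>y. h z + ereal (s \<bullet> (y - z)) \<le> h y)}"

definition lagr ::
  "('a \<Rightarrow> ereal) \<Rightarrow> ('b \<Rightarrow> ereal) \<Rightarrow> ('a \<Rightarrow> 'c) \<Rightarrow> ('b \<Rightarrow> 'c) \<Rightarrow> 'c::real_inner
     \<Rightarrow> 'a \<Rightarrow> 'b \<Rightarrow> 'c \<Rightarrow> ereal" where
  "lagr f g M C d u v z = f u + g v + ereal ((M u + C v - d) \<bullet> z)"

definition dual_fun ::
  "('a \<Rightarrow> ereal) \<Rightarrow> ('b \<Rightarrow> ereal) \<Rightarrow> ('a \<Rightarrow> 'c) \<Rightarrow> ('b \<Rightarrow> 'c) \<Rightarrow> 'c::real_inner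
     \<Rightarrow> 'c \<Rightarrow> ereal" where
  "dual_fun f g M C d z = (INF p. lagr f g M C d (fst p) (snd p) z)"

definition is_saddle_point ::
  "('a \<Rightarrow> ereal) \<Rightarrow> ('b \<Rightarrow> ereal) \<Rightarrow> ('a \<Rightarrow> 'c) \<Rightarrow> ('b \<Rightarrow> 'c) \<Rightarrow> 'c::real_inner
     \<Rightarrow> 'a \<Rightarrow> 'b \<Rightarrow> 'c \<Rightarrow> bool" where
  "is_saddle_point f g M C d us vs zs \<longleftrightarrow>
     \<bar>lagr f g M C d us vs zs\<bar> \<noteq> \<infinity> \<and>
     (\<forall>u v. lagr f g M C d us vs zs \<le> lagr f g M C d u v zs) \<and>
     (\<forall>z. lagr f g M C d us vs z \<le> lagr f g M C d us vs zs)"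

definition is_dual_solution ::
  "('a \<Rightarrow> ereal) \<Rightarrow> ('b \<Rightarrow> ereal) \<Rightarrow> ('a \<Rightarrow> 'c) \<Rightarrow> ('b \<Rightarrow> 'c) \<Rightarrow> 'c::real_inner
     \<Rightarrow> 'c \<Rightarrow> bool" where
  "is_dual_solution f g M C d zs \<longleftrightarrow> (\<forall>z. dual_fun f g M C d z \<le> dual_fun f g M C d zs)"

definition primal_value ::
  "('a \<Rightarrow> ereal) \<Rightarrow> ('b \<Rightarrow> ereal) \<Rightarrow> ('a \<Rightarrow> 'c) \<Rightarrow> ('b \<Rightarrow> 'c) \<Rightarrow> 'c::real_vector \<Rightarrow> ereal" where
  "primal_value f g M C d = (INF p \<in> {(u, v). M u + C v = d}. f (fst p) + g (snd p))"

definition h1_fun :: "('a::real_inner \<Rightarrow> ereal) \<Rightarrow> ('a \<Rightarrow> 'c::real_inner) \<Rightarrow> 'c \<Rightarrow> ereal" where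
  "h1_fun f M z = fconj f (- adjoint M z)"

definition h2_fun :: "('b::real_inner \<Rightarrow> ereal) \<Rightarrow> ('b \<Rightarrow> 'c::real_inner) \<Rightarrow> 'c \<Rightarrow> 'c \<Rightarrow> ereal" where
  "h2_fun g C d z = fconj g (- adjoint C z) + ereal (d \<bullet> z)"

text \<open>The PMM iteration, run for all k >= 1 without stopping.\<close>
definition pmm_seq ::
  "('a::euclidean_space \<Rightarrow> ereal) \<Rightarrow> ('b::euclidean_space \<Rightarrow> ereal) \<Rightarrow> ('a \<Rightarrow> 'c) \<Rightarrow> ('b \<Rightarrow> 'c)
   \<Rightarrow> 'c::euclidean_space \<Rightarrow> real \<Rightarrow> real
   \<Rightarrow> (nat \<Rightarrow> 'a) \<Rightarrow> (nat \<Rightarrow> 'b) \<Rightarrow> (nat \<Rightarrow> 'c) \<Rightarrow> (nat \<Rightarrow> 'c) \<Rightarrow> (nat \<Rightarrow> real) \<Rightarrow> (nat \<Rightarrow> real)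
   \<Rightarrow> bool" where
  "pmm_seq f g M C d lam rhobar u v z w \<gamma> \<rho> \<longleftrightarrow>
    (\<forall>k\<ge>1.
      (\<forall>v'. g (v k) + ereal ((z (k-1) + lam *\<^sub>R w (k-1)) \<bullet> (C (v k) - d) + lam / 2 * (norm (C (v k) - d))\<^sup>2)
            \<le> g v' + ereal ((z (k-1) + lam *\<^sub>R w (k-1)) \<bullet> (C v' - d) + lam / 2 * (norm (C v' - d))\<^sup>2)) \<and>
      (\<forall>u'. f (u k) + ereal ((z (k-1) + lam *\<^sub>R (C (v k) - d)) \<bullet> M (u k) + lam / 2 * (norm (M (u k)))\<^sup>2)
            \<le> f u' + ereal ((z (k-1) + lam *\<^sub>R (C (v k) - d)) \<bullet> M u' + lam / 2 * (norm (M u'))\<^sup>2)) \<and>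
      norm (M (u k) + C (v k) - d) + norm (M (u k) - w (k-1)) \<noteq> 0 \<and>
      \<gamma> k = (lam * (norm (C (v k) - d + w (k-1)))\<^sup>2
               + lam * ((d - C (v k) - M (u k)) \<bullet> (w (k-1) - M (u k))))
             / ((norm (M (u k) + C (v k) - d))\<^sup>2 + lam\<^sup>2 * (norm (M (u k) - w (k-1)))\<^sup>2) \<and>
      1 - rhobar \<le> \<rho> k \<and> \<rho> k \<le> 1 + rhobar \<and>
      z k = z (k-1) + (\<rho> k * \<gamma> k) *\<^sub>R (M (u k) + C (v k) - d) \<and>
      w k = w (k-1) - (\<rho> k * \<gamma> k * lam) *\<^sub>R (w (k-1) - M (u k)))"

end

theory Submission
  imports Defs
begin

lemma convex_fun_ineq:
  assumes "convex_fun h" "h x = ereal r" "h y = ereal s" "0 \<le> t" "t \<le> 1"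
  shows "h (x + t *\<^sub>R (y - x)) \<le> ereal ((1-t)*r + t * s)"
proof -
  have m: "(x,r) \<in> epigraph_e h" "(y,s) \<in> epigraph_e h" by (auto simp: epigraph_e_def assms)
  have "(1-t) *\<^sub>R (x,r) + t *\<^sub>R (y,s) \<in> epigraph_e h"
    using assms(1,4,5) m unfolding convex_fun_def by (intro convexD) auto
  moreover have "x + t *\<^sub>R (y - x) = (1-t) *\<^sub>R x + t *\<^sub>R y" by (simp add: algebra_simps)
  ultimately show ?thesis by (simp add: epigraph_e_def)
qed

lemma small_t_real:
  fixes r0 r1 K :: real
  assumes "K \<ge> 0" "\<And>t. 0 < t \<Longrightarrow> t \<le> 1 \<Longrightarrow> r0 \<le> r1 + t * K"
  shows "r0 \<le> r1"
proof (rule ccontr)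
  assume "\<not> r0 \<le> r1"
  define t where "t = min 1 ((r0 - r1) / (K + 1))"
  have tp: "0 < t" "t \<le> 1" using \<open>\<not> r0 \<le> r1\<close> assms(1) by (auto simp: t_def)
  have "t * K \<le> (r0 - r1) / (K + 1) * K" using tp assms(1) by (intro mult_right_mono) (auto simp: t_def)
  also have "\<dots> < r0 - r1" using \<open>\<not> r0 \<le> r1\<close> assms(1)
    by (simp add: field_simps)  
  finally show False using assms(2)[OF tp] by simp
qed

lemma opt_subgrad:
  fixes h :: "'a::real_vector \<Rightarrow> ereal"
  assumes cv: "convex_fun h" and np: "\<forall>x. h x \<noteq> -\<infinity>" and fin: "h x0 \<noteq> \<infinity>"
    and opt: "\<forall>x'. h x0 + ereal (Q x0) \<le> h x' + ereal (Q x')"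
    and Kpos: "K x' \<ge> 0"
    and bnd: "\<And>t. 0 < t \<Longrightarrow> t \<le> 1 \<Longrightarrow> Q (x0 + t *\<^sub>R (x' - x0)) - Q x0 \<le> t * D + t^2 * K x'"
  shows "h x0 \<le> h x' + ereal D"
proof (cases "h x' = \<infinity>")
  case True then show ?thesis by simp
next
  case False
  obtain r0 where r0: "h x0 = ereal r0" using fin np by (cases "h x0") auto
  obtain r1 where r1: "h x' = ereal r1" using False np by (cases "h x'") auto
  have "r0 \<le> r1 + D"
  proof (rule small_t_real[OF Kpos])
    fix t :: real assume t: "0 < t" "t \<le> 1"
    have c: "h (x0 + t *\<^sub>R (x' - x0)) \<le> ereal ((1-t)*r0 + t * r1)"
      by (rule convex_fun_ineq[OF cv r0 r1]) (use t in auto)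
    have "ereal (r0 + Q x0) \<le> h (x0 + t *\<^sub>R (x' - x0)) + ereal (Q (x0 + t *\<^sub>R (x' - x0)))"
      using opt r0 by (metis plus_ereal.simps(1))
    also have "\<dots> \<le> ereal ((1-t)*r0 + t * r1) + ereal (Q (x0 + t *\<^sub>R (x' - x0)))"
      using c by (intro add_right_mono)
    finally have "r0 + Q x0 \<le> (1-t)*r0 + t * r1 + Q (x0 + t *\<^sub>R (x' - x0))" by simp
    with bnd[OF t] have "t * r0 \<le> t * (r1 + D + t * K x')"
      by (simp add: algebra_simps power2_eq_square)
    then show "r0 \<le> r1 + D + t * K x'" using t by simp
  qed
  then show ?thesis using r0 r1 by simp
qed

lemma fconj_ge:
  "ereal (y \<bullet> x) - F x \<le> fconj F y"
  unfolding fconj_def by (rule SUP_upper) auto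

lemma conj_subdiff:
  fixes F :: "'a::euclidean_space \<Rightarrow> ereal" and A :: "'a \<Rightarrow> 'c::euclidean_space"
  assumes lA: "linear A" and np: "\<forall>x. F x \<noteq> -\<infinity>" and fin: "F x0 \<noteq> \<infinity>"
    and sg: "\<forall>x'. F x0 \<le> F x' + ereal (y0 \<bullet> (A x' - A x0))"
  shows "e - A x0 \<in> subdiff (\<lambda>z. fconj F (- adjoint A z) + ereal (e \<bullet> z)) y0"
proof -
  obtain r0 where r0: "F x0 = ereal r0" using fin np by (cases "F x0") auto
  have adj: "\<And>q x. adjoint A q \<bullet> x = q \<bullet> A x"
    using adjoint_clauses(2)[OF lA] by blast
  have eq: "fconj F (- adjoint A y0) = ereal (- (y0 \<bullet> A x0) - r0)"
  proof (rule antisym)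
    show "fconj F (- adjoint A y0) \<le> ereal (- (y0 \<bullet> A x0) - r0)"
      unfolding fconj_def
    proof (rule SUP_least)
      fix x
      show "ereal ((- adjoint A y0) \<bullet> x) - F x \<le> ereal (- (y0 \<bullet> A x0) - r0)"
      proof (cases "F x")
        case (real r)
        have "ereal r0 \<le> ereal (r + y0 \<bullet> (A x - A x0))" using sg r0 real by (metis plus_ereal.simps(1))
        then show ?thesis using real by (simp add: adj inner_diff_right)
      qed (use np in auto)
    qed
    show "ereal (- (y0 \<bullet> A x0) - r0) \<le> fconj F (- adjoint A y0)"
      using fconj_ge[of "- adjoint A y0" x0 F] r0 by (simp add: adj)
  qed
  show ?thesis unfolding subdiff_def
  proof (intro CollectI conjI allI)
    show "\<bar>fconj F (- adjoint A y0) + ereal (e \<bullet> y0)\<bar> \<noteq> \<infinity>" using eq by simp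
    fix y
    have "ereal (- (y \<bullet> A x0) - r0) \<le> fconj F (- adjoint A y)"
      using fconj_ge[of "- adjoint A y" x0 F] r0 by (simp add: adj)
    then have "ereal (- (y \<bullet> A x0) - r0) + ereal (e \<bullet> y) \<le> fconj F (- adjoint A y) + ereal (e \<bullet> y)"
      by (rule add_right_mono)
    moreover have "fconj F (- adjoint A y0) + ereal (e \<bullet> y0) + ereal ((e - A x0) \<bullet> (y - y0))
        = ereal (- (y \<bullet> A x0) - r0) + ereal (e \<bullet> y)"
      using eq by (simp add: inner_diff_left inner_diff_right inner_commute algebra_simps)
    ultimately show "fconj F (- adjoint A y0) + ereal (e \<bullet> y0) + ereal ((e - A x0) \<bullet> (y - y0))
        \<le> fconj F (- adjoint A y) + ereal (e \<bullet> y)" by simp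
  qed
qed

lemma subdiff_mono:
  assumes "s \<in> subdiff h z" "t \<in> subdiff h x"
  shows "(s - t) \<bullet> (z - x) \<ge> 0"
proof -
  obtain a where a: "h z = ereal a" using assms(1) unfolding subdiff_def by (cases "h z") auto
  obtain b where b: "h x = ereal b" using assms(2) unfolding subdiff_def by (cases "h x") auto
  have "h z + ereal (s \<bullet> (x - z)) \<le> h x" "h x + ereal (t \<bullet> (z - x)) \<le> h z"
    using assms unfolding subdiff_def by auto
  then have "a + s \<bullet> (x - z) \<le> b" "b + t \<bullet> (z - x) \<le> a" using a b by auto
  then show ?thesis by (simp add: inner_diff_left inner_diff_right inner_commute algebra_simps)
qed

lemma subdiff_closed:
  fixes F :: "'a::euclidean_space \<Rightarrow> ereal" and A :: "'a \<Rightarrow> 'c::euclidean_space"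
  assumes lA: "linear A" and np: "\<forall>x. F x \<noteq> -\<infinity>" and pr: "F x1 \<noteq> \<infinity>"
    and H: "H = (\<lambda>z. fconj F (- adjoint A z) + ereal (e \<bullet> z))"
    and sd: "\<And>k. s k \<in> subdiff H (q k)" and qc: "q \<longlonglongrightarrow> q0" and sc: "s \<longlonglongrightarrow> s0"
  shows "s0 \<in> subdiff H q0"
proof -
  have adj: "\<And>q x. adjoint A q \<bullet> x = q \<bullet> A x"
    using adjoint_clauses(2)[OF lA] by blast
  obtain r1 where r1: "F x1 = ereal r1" using pr np by (cases "F x1") auto
  have Hlow: "H y \<noteq> -\<infinity>" for y
  proof -
    have "ereal (- (y \<bullet> A x1) - r1) \<le> fconj F (- adjoint A y)"
      using fconj_ge[of "- adjoint A y" x1 F] r1 by (simp add: adj)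
    then show ?thesis unfolding H by auto
  qed
  have key: "H q0 + ereal (s0 \<bullet> (y - q0)) \<le> H y" if Hy: "H y \<noteq> \<infinity>" for y
  proof -
    obtain R where R: "H y = ereal R" using Hy Hlow[of y] by (cases "H y") auto
    have "fconj F (- adjoint A q0) \<le> ereal (R - s0 \<bullet> (y - q0) - e \<bullet> q0)"
      unfolding fconj_def
    proof (rule SUP_least)
      fix x
      show "ereal ((- adjoint A q0) \<bullet> x) - F x \<le> ereal (R - s0 \<bullet> (y - q0) - e \<bullet> q0)"
      proof (cases "F x")
        case (real Fx)
        have ineq: "- (q k \<bullet> A x) - Fx + e \<bullet> q k + s k \<bullet> (y - q k) \<le> R" for k
        proof -
          have s1: "H (q k) + ereal (s k \<bullet> (y - q k)) \<le> H y" and fk: "\<bar>H (q k)\<bar> \<noteq> \<infinity>"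
            using sd[of k] unfolding subdiff_def by auto
          have "ereal (- (q k \<bullet> A x) - Fx) \<le> fconj F (- adjoint A (q k))"
            using fconj_ge[of "- adjoint A (q k)" x F] real by (simp add: adj)
          then have "ereal (- (q k \<bullet> A x) - Fx) + ereal (e \<bullet> q k) \<le> H (q k)"
            unfolding H by (rule add_right_mono)
          then have "ereal (- (q k \<bullet> A x) - Fx + e \<bullet> q k + s k \<bullet> (y - q k)) \<le> H (q k) + ereal (s k \<bullet> (y - q k))"
            by (metis add_right_mono plus_ereal.simps(1))
          also note s1
          finally show ?thesis using R by simp
        qed
        have lim: "(\<lambda>k. - (q k \<bullet> A x) - Fx + e \<bullet> q k + s k \<bullet> (y - q k)) \<longlonglongrightarrow>
                   - (q0 \<bullet> A x) - Fx + e \<bullet> q0 + s0 \<bullet> (y - q0)"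
          by (intro tendsto_intros qc sc)
        have "- (q0 \<bullet> A x) - Fx + e \<bullet> q0 + s0 \<bullet> (y - q0) \<le> R"
          by (rule LIMSEQ_le_const2[OF lim]) (use ineq in auto)
        then show ?thesis using real by (simp add: adj)
      qed (use np in auto)
    qed
    then have "H q0 \<le> ereal (R - s0 \<bullet> (y - q0) - e \<bullet> q0) + ereal (e \<bullet> q0)"
      unfolding H by (rule add_right_mono)
    then have "H q0 + ereal (s0 \<bullet> (y - q0)) \<le> ereal (R - s0 \<bullet> (y - q0) - e \<bullet> q0) + ereal (e \<bullet> q0) + ereal (s0 \<bullet> (y - q0))"
      by (rule add_right_mono)
    then show ?thesis using R by simp
  qed
  have "H (q 0) \<noteq> \<infinity>" using sd[of 0] unfolding subdiff_def by auto
  moreover from key[OF this] have "H q0 + ereal (s0 \<bullet> (q 0 - q0)) \<le> H (q 0)" .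
  ultimately have "H q0 \<noteq> \<infinity>" by auto
  then have "\<bar>H q0\<bar> \<noteq> \<infinity>" using Hlow[of q0] by auto
  then show ?thesis unfolding subdiff_def using key
    by (auto simp del: ereal_infty_less ereal_less_PInfty) (metis PInfty_neq_ereal(1) add.commute ereal_less_eq(1) ereal_plus_eq_PInfty)
qed

lemma quad_bound:
  fixes L :: "'a::real_vector \<Rightarrow> 'c::real_inner"
  assumes "linear L"
  shows "(p \<bullet> (L (x0 + t *\<^sub>R (x' - x0)) - e) + c/2 * (norm (L (x0 + t *\<^sub>R (x' - x0)) - e))\<^sup>2)
       - (p \<bullet> (L x0 - e) + c/2 * (norm (L x0 - e))\<^sup>2)
       = t * ((p + c *\<^sub>R (L x0 - e)) \<bullet> (L x' - L x0)) + t\<^sup>2 * (c/2 * (norm (L x' - L x0))\<^sup>2)"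
proof -
  have "L (x0 + t *\<^sub>R (x' - x0)) - e = (L x0 - e) + t *\<^sub>R (L x' - L x0)"
    using assms by (simp add: linear_add linear_scale linear_diff algebra_simps)
  moreover define q where "q = L x0 - e"
  moreover define \<delta> where "\<delta> = L x' - L x0"
  ultimately have e1: "L (x0 + t *\<^sub>R (x' - x0)) - e = q + t *\<^sub>R \<delta>" by simp
  show ?thesis unfolding e1 q_def[symmetric] \<delta>_def[symmetric] power2_norm_eq_inner
    by (simp add: inner_add_left inner_add_right inner_commute algebra_simps power2_eq_square)
qed

lemma fejer_real:
  fixes N \<Phi> B \<rho> rb e lam :: real
  assumes N: "N > 0" and B: "B \<ge> \<Phi>" and P: "\<Phi> \<ge> lam * e / 2" and Nb: "N \<le> (2 + lam\<^sup>2) * e"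
    and lam: "lam > 0" and e: "e \<ge> 0" and rb: "0 \<le> rb" "rb < 1" and rho: "1 - rb \<le> \<rho>" "\<rho> \<le> 1 + rb"
  shows "- 2 * (\<rho> * (\<Phi> / N)) * B + (\<rho> * (\<Phi> / N))\<^sup>2 * N + (1 - rb\<^sup>2) * (lam\<^sup>2 / (4 * (2 + lam\<^sup>2))) * e \<le> 0"
proof -
  have "lam * e / 2 \<ge> 0" using lam e by simp
  then have P0: "\<Phi> \<ge> 0" using P by linarith
  have r0: "\<rho> > 0" using rb rho by simp
  define G where "G = \<rho> * (\<Phi> / N)"
  have G0: "G \<ge> 0" using P0 r0 N by (simp add: G_def)
  have "- 2 * G * B \<le> - 2 * G * \<Phi>" using G0 B by (simp add: mult_left_mono)
  moreover have "- 2 * G * \<Phi> + G\<^sup>2 * N = - ((\<rho> * (2 - \<rho>)) * (\<Phi>\<^sup>2 / N))"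
    using N by (simp add: G_def field_simps power2_eq_square)
  moreover have "(1 - rb\<^sup>2) \<le> \<rho> * (2 - \<rho>)"
  proof -
    have "(1 - \<rho>)\<^sup>2 \<le> rb\<^sup>2" using rho rb by (simp add: abs_le_square_iff[symmetric] abs_le_iff) 
    then show ?thesis by (simp add: power2_eq_square algebra_simps)
  qed
  moreover have "(lam\<^sup>2 / (4 * (2 + lam\<^sup>2))) * e \<le> \<Phi>\<^sup>2 / N"
  proof -
    have "(lam\<^sup>2 / (4 * (2 + lam\<^sup>2))) * e * N \<le> (lam\<^sup>2 / (4 * (2 + lam\<^sup>2))) * e * ((2 + lam\<^sup>2) * e)"
      using Nb e by (intro mult_left_mono) auto
    also have "\<dots> = (lam * e / 2)\<^sup>2"
    proof -
      have h: "8 + lam * (lam * 4) \<noteq> 0" using lam by (smt (verit) mult_pos_pos)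
      show ?thesis using h by (simp add: field_simps power2_eq_square)
    qed
    also have "\<dots> \<le> \<Phi>\<^sup>2" using P lam e by (intro power_mono) auto
    finally show ?thesis using N by (simp add: field_simps)
  qed
  moreover have "0 \<le> 1 - rb\<^sup>2" using rb by (simp add: abs_square_le_1)
  moreover have "0 \<le> lam\<^sup>2 / (4 * (2 + lam\<^sup>2)) * e" using e by simp
  ultimately have "(1 - rb\<^sup>2) * (lam\<^sup>2 / (4 * (2 + lam\<^sup>2)) * e) \<le> (\<rho> * (2 - \<rho>)) * (\<Phi>\<^sup>2 / N)"
    and "- 2 * G * B + G\<^sup>2 * N \<le> - ((\<rho> * (2 - \<rho>)) * (\<Phi>\<^sup>2 / N))"
    by (intro mult_mono, linarith+)
  then have "- 2 * G * B + G\<^sup>2 * N \<le> - ((1 - rb\<^sup>2) * (lam\<^sup>2 / (4 * (2 + lam\<^sup>2)) * e))"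
    by linarith
  then show ?thesis unfolding G_def by simp
qed

lemma fejer_vec:
  fixes Z W U V d \<zeta> \<omega> :: "'c::real_inner"
  assumes lam: "lam > 0" and rb: "0 \<le> rb" "rb < 1" and rho: "1 - rb \<le> \<rho>" "\<rho> \<le> 1 + rb"
    and stop: "norm (U + V - d) + norm (U - W) \<noteq> 0"
    and gam: "\<gamma> = (lam * (norm (V - d + W))\<^sup>2 + lam * ((d - V - U) \<bullet> (W - U)))
             / ((norm (U + V - d))\<^sup>2 + lam\<^sup>2 * (norm (U - W))\<^sup>2)"
    and Z': "Z' = Z + (\<rho> * \<gamma>) *\<^sub>R (U + V - d)"
    and W': "W' = W - (\<rho> * \<gamma> * lam) *\<^sub>R (W - U)"
    and m1: "(d - V - \<omega>) \<bullet> (Z + lam *\<^sub>R W + lam *\<^sub>R (V - d) - \<zeta>) \<ge> 0"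
    and m2: "(- U - - \<omega>) \<bullet> (Z + lam *\<^sub>R W + lam *\<^sub>R (V - d) - lam *\<^sub>R (W - U) - \<zeta>) \<ge> 0"
  shows "(norm (Z' - \<zeta>))\<^sup>2 + (norm (W' - \<omega>))\<^sup>2
         + (1 - rb\<^sup>2) * (lam\<^sup>2 / (4 * (2 + lam\<^sup>2))) * ((norm (d - V - W))\<^sup>2 + (norm (W - U))\<^sup>2)
         \<le> (norm (Z - \<zeta>))\<^sup>2 + (norm (W - \<omega>))\<^sup>2"
proof -
  define s where "s = d - V - W"
  define t where "t = W - U"
  define A where "A = Z - \<zeta>"
  define E where "E = W - \<omega>"
  define \<Phi> where "\<Phi> = lam * (s \<bullet> s + s \<bullet> t + t \<bullet> t)"
  define N where "N = (s + t) \<bullet> (s + t) + lam\<^sup>2 * (t \<bullet> t)"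
  define e where "e = s \<bullet> s + t \<bullet> t"
  define B where "B = (s + t) \<bullet> A + lam * (t \<bullet> E)"
  have UV: "U + V - d = - (s + t)" "U - W = - t" "V - d + W = - s" "d - V - U = s + t"
    by (simp_all add: s_def t_def algebra_simps)
  have Neq: "(norm (U + V - d))\<^sup>2 + lam\<^sup>2 * (norm (U - W))\<^sup>2 = N"
    unfolding UV N_def by (simp add: power2_norm_eq_inner inner_diff_left inner_diff_right inner_add_left inner_add_right)
  have num: "lam * (norm (V - d + W))\<^sup>2 + lam * ((d - V - U) \<bullet> (W - U)) = \<Phi>"
    unfolding UV \<Phi>_def by (simp add: power2_norm_eq_inner t_def[symmetric] inner_add_left algebra_simps)
  have Npos: "N > 0"
  proof -
    have "N \<ge> 0" unfolding N_def by simp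
    moreover have "N \<noteq> 0"
    proof
      assume "N = 0"
      then have "(norm (U + V - d))\<^sup>2 = 0 \<and> lam\<^sup>2 * (norm (U - W))\<^sup>2 = 0"
        using Neq by (smt (verit) zero_le_power2 mult_nonneg_nonneg)
      then show False using stop lam by auto
    qed
    ultimately show ?thesis by simp
  qed
  have g: "\<gamma> = \<Phi> / N" using gam Neq num by simp
  have ZA: "Z' - \<zeta> = A - (\<rho> * \<gamma>) *\<^sub>R (s + t)" unfolding Z' A_def UV by (simp add: algebra_simps)
  have WE: "W' - \<omega> = E - (\<rho> * \<gamma> * lam) *\<^sub>R t" unfolding W' E_def t_def by (simp add: algebra_simps)
  have dist: "(norm (Z' - \<zeta>))\<^sup>2 + (norm (W' - \<omega>))\<^sup>2 = (norm A)\<^sup>2 + (norm E)\<^sup>2 - 2 * (\<rho> * \<gamma>) * B + (\<rho> * \<gamma>)\<^sup>2 * N"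
    unfolding ZA WE B_def N_def power2_norm_eq_inner
    by (simp add: inner_add_left inner_add_right inner_diff_left inner_diff_right inner_commute algebra_simps power2_eq_square)
  have Bid: "B = \<Phi> + (d - V - \<omega>) \<bullet> (Z + lam *\<^sub>R W + lam *\<^sub>R (V - d) - \<zeta>)
                  + (- U - - \<omega>) \<bullet> (Z + lam *\<^sub>R W + lam *\<^sub>R (V - d) - lam *\<^sub>R (W - U) - \<zeta>)"
  proof -
    have x1: "Z + lam *\<^sub>R W + lam *\<^sub>R (V - d) - \<zeta> = A - lam *\<^sub>R s"
      by (simp add: A_def s_def algebra_simps)
    have x2: "Z + lam *\<^sub>R W + lam *\<^sub>R (V - d) - lam *\<^sub>R (W - U) - \<zeta> = A - lam *\<^sub>R (s + t)"
      by (simp add: A_def s_def t_def algebra_simps)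
    have x3: "d - V - \<omega> = s + E" by (simp add: s_def E_def)
    have x4: "- U - - \<omega> = t - E" by (simp add: t_def E_def)
    show ?thesis unfolding x1 x2 x3 x4 B_def \<Phi>_def
      by (simp add: inner_add_left inner_add_right inner_diff_left inner_diff_right inner_commute algebra_simps)
  qed
  have BP: "B \<ge> \<Phi>" using Bid m1 m2 by simp
  have Pe: "\<Phi> \<ge> lam * e / 2"
  proof -
    have "0 \<le> (s + t) \<bullet> (s + t)" by simp
    then have "s \<bullet> s + s \<bullet> t + t \<bullet> t \<ge> e / 2"
      by (simp add: e_def inner_add_left inner_add_right inner_commute)
    then have "lam * (e / 2) \<le> lam * (s \<bullet> s + s \<bullet> t + t \<bullet> t)" using lam by (intro mult_left_mono) auto
    then show ?thesis unfolding \<Phi>_def by simp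
  qed
  have Ne: "N \<le> (2 + lam\<^sup>2) * e"
  proof -
    have "0 \<le> (s - t) \<bullet> (s - t)" by simp
    then have "(s + t) \<bullet> (s + t) \<le> 2 * e"
      by (simp add: e_def inner_add_left inner_add_right inner_diff_left inner_diff_right inner_commute)
    moreover have "lam\<^sup>2 * (t \<bullet> t) \<le> lam\<^sup>2 * e" unfolding e_def by (intro mult_left_mono) auto
    ultimately show ?thesis unfolding N_def by (simp add: algebra_simps)
  qed
  have e0: "e \<ge> 0" by (simp add: e_def)
  have "- 2 * (\<rho> * (\<Phi> / N)) * B + (\<rho> * (\<Phi> / N))\<^sup>2 * N + (1 - rb\<^sup>2) * (lam\<^sup>2 / (4 * (2 + lam\<^sup>2))) * e \<le> 0"
    by (rule fejer_real[OF Npos BP Pe Ne lam e0 rb rho])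
  moreover have "(norm (d - V - W))\<^sup>2 + (norm (W - U))\<^sup>2 = e"
    by (simp add: e_def s_def t_def power2_norm_eq_inner)
  ultimately show ?thesis using dist g
    by (simp add: A_def E_def)
qed

lemma dec_sub_zero:
  fixes D :: "nat \<Rightarrow> real"
  assumes dec: "\<And>n. D (Suc n) \<le> D n" and nn: "\<And>n. D n \<ge> 0"
    and r: "strict_mono r" and lim: "(\<lambda>j. D (r j)) \<longlonglongrightarrow> 0"
  shows "D \<longlonglongrightarrow> 0"
proof (rule LIMSEQ_I)
  fix \<epsilon> :: real assume "\<epsilon> > 0"
  then obtain J where J: "\<forall>j\<ge>J. norm (D (r j) - 0) < \<epsilon>" using LIMSEQ_D[OF lim] by blast
  have ds: "decseq D" using dec by (simp add: decseq_Suc_iff)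
  show "\<exists>no. \<forall>n\<ge>no. norm (D n - 0) < \<epsilon>"
  proof (intro exI allI impI)
    fix n assume "r J \<le> n"
    then have "D n \<le> D (r J)" using ds by (simp add: decseq_def)
    then show "norm (D n - 0) < \<epsilon>" using J nn[of n] by auto
  qed
qed

lemma shiftlim:
  fixes f :: "nat \<Rightarrow> 'a::topological_space"
  shows "(\<lambda>n. f (Suc n)) \<longlonglongrightarrow> l \<Longrightarrow> f \<longlonglongrightarrow> l"
  by (simp add: filterlim_sequentially_Suc)

lemma pmm_at:
  assumes "pmm_seq f g M C d lam rhobar u v z w \<gamma> \<rho>"
  shows "(\<forall>v'. g (v (Suc n)) + ereal ((z n + lam *\<^sub>R w n) \<bullet> (C (v (Suc n)) - d) + lam / 2 * (norm (C (v (Suc n)) - d))\<^sup>2)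
            \<le> g v' + ereal ((z n + lam *\<^sub>R w n) \<bullet> (C v' - d) + lam / 2 * (norm (C v' - d))\<^sup>2)) \<and>
      (\<forall>u'. f (u (Suc n)) + ereal ((z n + lam *\<^sub>R (C (v (Suc n)) - d)) \<bullet> M (u (Suc n)) + lam / 2 * (norm (M (u (Suc n))))\<^sup>2)
            \<le> f u' + ereal ((z n + lam *\<^sub>R (C (v (Suc n)) - d)) \<bullet> M u' + lam / 2 * (norm (M u'))\<^sup>2)) \<and>
      norm (M (u (Suc n)) + C (v (Suc n)) - d) + norm (M (u (Suc n)) - w n) \<noteq> 0 \<and>
      \<gamma> (Suc n) = (lam * (norm (C (v (Suc n)) - d + w n))\<^sup>2
               + lam * ((d - C (v (Suc n)) - M (u (Suc n))) \<bullet> (w n - M (u (Suc n)))))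
             / ((norm (M (u (Suc n)) + C (v (Suc n)) - d))\<^sup>2 + lam\<^sup>2 * (norm (M (u (Suc n)) - w n))\<^sup>2) \<and>
      1 - rhobar \<le> \<rho> (Suc n) \<and> \<rho> (Suc n) \<le> 1 + rhobar \<and>
      z (Suc n) = z n + (\<rho> (Suc n) * \<gamma> (Suc n)) *\<^sub>R (M (u (Suc n)) + C (v (Suc n)) - d) \<and>
      w (Suc n) = w n - (\<rho> (Suc n) * \<gamma> (Suc n) * lam) *\<^sub>R (w n - M (u (Suc n)))"
proof -
  have one: "(1::nat) \<le> Suc n" by simp
  from assms[unfolded pmm_seq_def, rule_format, OF one, unfolded diff_Suc_1] show ?thesis .
qed

theorem mainTheorem4:
  fixes f :: "'a::euclidean_space \<Rightarrow> ereal" and g :: "'b::euclidean_space \<Rightarrow> ereal"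
    and M :: "'a \<Rightarrow> 'c::euclidean_space" and C :: "'b \<Rightarrow> 'c" and d :: 'c
    and lam rhobar :: real
    and u :: "nat \<Rightarrow> 'a" and v :: "nat \<Rightarrow> 'b" and z w :: "nat \<Rightarrow> 'c"
    and \<gamma> \<rho> :: "nat \<Rightarrow> real"
  assumes f_pcc: "proper_fun f" "closed_fun f" "convex_fun f"
    and g_pcc: "proper_fun g" "closed_fun g" "convex_fun g"
    and lin: "linear M" "linear C"
    and A1: "\<exists>us vs zs. is_saddle_point f g M C d us vs zs"
    and A2: "rel_interior (edom (fconj f)) \<inter> range (adjoint M) \<noteq> {}"
    and A3: "rel_interior (edom (fconj g)) \<inter> range (adjoint C) \<noteq> {}"
    and lam_pos: "lam > 0"
    and rhobar: "0 \<le> rhobar" "rhobar < 1"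
    and pmm: "pmm_seq f g M C d lam rhobar u v z w \<gamma> \<rho>"
  defines "x \<equiv> (\<lambda>k. z (k-1) + lam *\<^sub>R w (k-1) + lam *\<^sub>R (C (v k) - d))"
    and "b \<equiv> (\<lambda>k. d - C (v k))"
    and "y \<equiv> (\<lambda>k. z (k-1) + lam *\<^sub>R w (k-1) + lam *\<^sub>R (C (v k) - d) - lam *\<^sub>R (w (k-1) - M (u k)))"
    and "a \<equiv> (\<lambda>k. - M (u k))"
  shows "(\<exists>zs ws. is_dual_solution f g M C d zs \<and>
            - ws \<in> subdiff (h1_fun f M) zs \<and> ws \<in> subdiff (h2_fun g C d) zs \<and>
            ((\<lambda>k. (x k, b k)) \<longlonglongrightarrow> (zs, ws)) \<and>
            ((\<lambda>k. (y k, - a k)) \<longlonglongrightarrow> (zs, ws)) \<and>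
            ((\<lambda>k. (z k, w k)) \<longlonglongrightarrow> (zs, ws)))
       \<and> ((\<lambda>k. M (u k) + C (v k) - d) \<longlonglongrightarrow> 0)
       \<and> ((\<lambda>k. x k - y k) \<longlonglongrightarrow> 0)
       \<and> ((\<lambda>k. f (u k) + g (v k)) \<longlonglongrightarrow> primal_value f g M C d)"
proof -
  have fnp: "\<forall>x. f x \<noteq> -\<infinity>" using f_pcc(1) by (simp add: proper_fun_def)
  obtain uf where uf: "f uf \<noteq> \<infinity>" using f_pcc(1) by (auto simp: proper_fun_def)
  have gnp: "\<forall>x. g x \<noteq> -\<infinity>" using g_pcc(1) by (simp add: proper_fun_def)
  obtain vg where vg: "g vg \<noteq> \<infinity>" using g_pcc(1) by (auto simp: proper_fun_def)
  note pk = pmm_at[OF pmm]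
  note vopt = pk[THEN conjunct1]
  note uopt = pk[THEN conjunct2, THEN conjunct1]
  note stop = pk[THEN conjunct2, THEN conjunct2, THEN conjunct1]
  note gam = pk[THEN conjunct2, THEN conjunct2, THEN conjunct2, THEN conjunct1]
  note rho1 = pk[THEN conjunct2, THEN conjunct2, THEN conjunct2, THEN conjunct2, THEN conjunct1]
  note rho2 = pk[THEN conjunct2, THEN conjunct2, THEN conjunct2, THEN conjunct2, THEN conjunct2, THEN conjunct1]
  note zup = pk[THEN conjunct2, THEN conjunct2, THEN conjunct2, THEN conjunct2, THEN conjunct2, THEN conjunct2, THEN conjunct1]
  note wup = pk[THEN conjunct2, THEN conjunct2, THEN conjunct2, THEN conjunct2, THEN conjunct2, THEN conjunct2, THEN conjunct2]

  define s where "s n = d - C (v (Suc n)) - w n" for n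
  define t where "t n = w n - M (u (Suc n))" for n
  define e where "e n = (norm (s n))\<^sup>2 + (norm (t n))\<^sup>2" for n
  define \<kappa> where "\<kappa> = (1 - rhobar\<^sup>2) * (lam\<^sup>2 / (4 * (2 + lam\<^sup>2)))"
  have kpos: "\<kappa> > 0"
  proof -
    have "rhobar\<^sup>2 < 1" using rhobar by (simp add: abs_square_less_1)
    moreover have "lam\<^sup>2 / (4 * (2 + lam\<^sup>2)) > 0" using lam_pos by (simp add: add_pos_nonneg)
    ultimately show ?thesis unfolding \<kappa>_def by (intro mult_pos_pos) auto
  qed
  have xS: "x (Suc n) = z n - lam *\<^sub>R s n" for n unfolding x_def s_def by (simp add: algebra_simps)
  have yS: "y (Suc n) = z n - lam *\<^sub>R (s n + t n)" for n unfolding y_def s_def t_def by (simp add: algebra_simps)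
  have bS: "b (Suc n) = s n + w n" for n unfolding b_def s_def by simp
  have aS: "- a (Suc n) = w n - t n" for n unfolding a_def t_def by simp
  have MuS: "M (u (Suc n)) = w n - t n" for n unfolding t_def by simp
  have CvS: "C (v (Suc n)) = d - s n - w n" for n unfolding s_def by simp

  have gfin: "g (v (Suc n)) \<noteq> \<infinity>" for n
    using vopt[of n, THEN spec, of vg] vg gnp by auto
  have ffin: "f (u (Suc n)) \<noteq> \<infinity>" for n
    using uopt[of n, THEN spec, of uf] uf fnp by auto

  have gsub: "\<forall>v'. g (v (Suc n)) \<le> g v' + ereal (x (Suc n) \<bullet> (C v' - C (v (Suc n))))" for n
  proof
    fix v'
    have xe: "z n + lam *\<^sub>R w n + lam *\<^sub>R (C (v (Suc n)) - d) = x (Suc n)" unfolding x_def by simp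
    show "g (v (Suc n)) \<le> g v' + ereal (x (Suc n) \<bullet> (C v' - C (v (Suc n))))"
    proof (rule opt_subgrad[where Q="\<lambda>v'. (z n + lam *\<^sub>R w n) \<bullet> (C v' - d) + lam / 2 * (norm (C v' - d))\<^sup>2"
          and K="\<lambda>v'. lam/2 * (norm (C v' - C (v (Suc n))))\<^sup>2"])
      show "convex_fun g" by (rule g_pcc(3))
      show "\<forall>x. g x \<noteq> -\<infinity>" by (rule gnp)
      show "g (v (Suc n)) \<noteq> \<infinity>" by (rule gfin)
      show "\<forall>x'. g (v (Suc n)) + ereal ((z n + lam *\<^sub>R w n) \<bullet> (C (v (Suc n)) - d) + lam / 2 * (norm (C (v (Suc n)) - d))\<^sup>2)
            \<le> g x' + ereal ((z n + lam *\<^sub>R w n) \<bullet> (C x' - d) + lam / 2 * (norm (C x' - d))\<^sup>2)"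
        by (rule vopt)
      show "0 \<le> lam/2 * (norm (C v' - C (v (Suc n))))\<^sup>2" using lam_pos by simp
      fix \<tau> :: real assume "0 < \<tau>" "\<tau> \<le> 1"
      show "((z n + lam *\<^sub>R w n) \<bullet> (C (v (Suc n) + \<tau> *\<^sub>R (v' - v (Suc n))) - d) + lam / 2 * (norm (C (v (Suc n) + \<tau> *\<^sub>R (v' - v (Suc n))) - d))\<^sup>2)
          - ((z n + lam *\<^sub>R w n) \<bullet> (C (v (Suc n)) - d) + lam / 2 * (norm (C (v (Suc n)) - d))\<^sup>2)
          \<le> \<tau> * (x (Suc n) \<bullet> (C v' - C (v (Suc n)))) + \<tau>\<^sup>2 * (lam/2 * (norm (C v' - C (v (Suc n))))\<^sup>2)"
        using quad_bound[OF lin(2), of "z n + lam *\<^sub>R w n" "v (Suc n)" \<tau> v' d lam] xe by simp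
    qed
  qed
  have fsub: "\<forall>u'. f (u (Suc n)) \<le> f u' + ereal (y (Suc n) \<bullet> (M u' - M (u (Suc n))))" for n
  proof
    fix u'
    have ye: "z n + lam *\<^sub>R (C (v (Suc n)) - d) + lam *\<^sub>R M (u (Suc n)) = y (Suc n)"
      unfolding y_def by (simp add: algebra_simps)
    show "f (u (Suc n)) \<le> f u' + ereal (y (Suc n) \<bullet> (M u' - M (u (Suc n))))"
    proof (rule opt_subgrad[where Q="\<lambda>u'. (z n + lam *\<^sub>R (C (v (Suc n)) - d)) \<bullet> M u' + lam / 2 * (norm (M u'))\<^sup>2"
          and K="\<lambda>u'. lam/2 * (norm (M u' - M (u (Suc n))))\<^sup>2"])
      show "convex_fun f" by (rule f_pcc(3))
      show "\<forall>x. f x \<noteq> -\<infinity>" by (rule fnp)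
      show "f (u (Suc n)) \<noteq> \<infinity>" by (rule ffin)
      show "\<forall>x'. f (u (Suc n)) + ereal ((z n + lam *\<^sub>R (C (v (Suc n)) - d)) \<bullet> M (u (Suc n)) + lam / 2 * (norm (M (u (Suc n))))\<^sup>2)
            \<le> f x' + ereal ((z n + lam *\<^sub>R (C (v (Suc n)) - d)) \<bullet> M x' + lam / 2 * (norm (M x'))\<^sup>2)"
        by (rule uopt)
      show "0 \<le> lam/2 * (norm (M u' - M (u (Suc n))))\<^sup>2" using lam_pos by simp
      fix \<tau> :: real assume "0 < \<tau>" "\<tau> \<le> 1"
      show "((z n + lam *\<^sub>R (C (v (Suc n)) - d)) \<bullet> M (u (Suc n) + \<tau> *\<^sub>R (u' - u (Suc n))) + lam / 2 * (norm (M (u (Suc n) + \<tau> *\<^sub>R (u' - u (Suc n)))))\<^sup>2)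
          - ((z n + lam *\<^sub>R (C (v (Suc n)) - d)) \<bullet> M (u (Suc n)) + lam / 2 * (norm (M (u (Suc n))))\<^sup>2)
          \<le> \<tau> * (y (Suc n) \<bullet> (M u' - M (u (Suc n)))) + \<tau>\<^sup>2 * (lam/2 * (norm (M u' - M (u (Suc n))))\<^sup>2)"
        using quad_bound[OF lin(1), of "z n + lam *\<^sub>R (C (v (Suc n)) - d)" "u (Suc n)" \<tau> u' 0 lam] ye by simp
    qed
  qed
  have h1eq: "h1_fun f M = (\<lambda>z. fconj f (- adjoint M z) + ereal (0 \<bullet> z))"
    by (simp add: h1_fun_def fun_eq_iff)
  have h2eq: "h2_fun g C d = (\<lambda>z. fconj g (- adjoint C z) + ereal (d \<bullet> z))"
    by (simp add: h2_fun_def fun_eq_iff)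
  have bsub: "b (Suc n) \<in> subdiff (h2_fun g C d) (x (Suc n))" for n
    using conj_subdiff[OF lin(2) gnp gfin[of n] gsub[of n], where e=d] unfolding h2eq b_def by simp
  have asub: "a (Suc n) \<in> subdiff (h1_fun f M) (y (Suc n))" for n
    using conj_subdiff[OF lin(1) fnp ffin[of n] fsub[of n], where e=0] unfolding h1eq a_def by simp

  obtain us vs zs where sp: "is_saddle_point f g M C d us vs zs" using A1 by blast
  have spfin: "\<bar>lagr f g M C d us vs zs\<bar> \<noteq> \<infinity>"
    and spmin: "\<forall>u' v'. lagr f g M C d us vs zs \<le> lagr f g M C d u' v' zs"
    and spmax: "\<forall>z'. lagr f g M C d us vs z' \<le> lagr f g M C d us vs zs"
    using sp unfolding is_saddle_point_def by auto
  have "f us \<noteq> \<infinity>"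
  proof
    assume "f us = \<infinity>"
    then have "lagr f g M C d us vs zs = \<infinity>" using gnp by (cases "g vs") (auto simp: lagr_def)
    with spfin show False by simp
  qed
  then obtain Fs where Fs: "f us = ereal Fs" using fnp by (cases "f us") auto
  have "g vs \<noteq> \<infinity>"
  proof
    assume "g vs = \<infinity>"
    then have "lagr f g M C d us vs zs = \<infinity>" using Fs by (simp add: lagr_def)
    with spfin show False by simp
  qed
  then obtain Gs where Gs: "g vs = ereal Gs" using gnp by (cases "g vs") auto
  define P where "P = Fs + Gs"
  have feas: "M us + C vs = d"
  proof -
    define r where "r = M us + C vs - d"
    have "lagr f g M C d us vs (zs + r) \<le> lagr f g M C d us vs zs" using spmax by blast
    then have "Fs + Gs + r \<bullet> (zs + r) \<le> Fs + Gs + r \<bullet> zs" by (simp add: lagr_def Fs Gs r_def)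
    then have "r \<bullet> r \<le> 0" by (simp add: inner_add_right)
    then have "r = 0" by (metis inner_eq_zero_iff inner_ge_zero order_antisym)
    then show ?thesis by (simp add: r_def)
  qed
  have lagr_eq: "lagr f g M C d us vs z' = ereal P" for z' using feas by (simp add: lagr_def Fs Gs P_def)
  have Pmin: "ereal P \<le> f u' + g v' + ereal ((M u' + C v' - d) \<bullet> zs)" for u' v'
    using spmin lagr_eq[of zs] by (simp add: lagr_def)
  have Cvs: "C vs = d - M us" using feas by (simp add: algebra_simps)
  have fsubs: "\<forall>u'. f us \<le> f u' + ereal (zs \<bullet> (M u' - M us))"
  proof
    fix u'
    have id: "M u' + C vs - d = M u' - M us" using Cvs by (simp add: algebra_simps)
    have "ereal P \<le> f u' + ereal Gs + ereal ((M u' - M us) \<bullet> zs)" using Pmin[of u' vs] Gs unfolding id by simp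
    then show "f us \<le> f u' + ereal (zs \<bullet> (M u' - M us))"
      using Fs fnp by (cases "f u'") (auto simp: P_def inner_commute)
  qed
  have gsubs: "\<forall>v'. g vs \<le> g v' + ereal (zs \<bullet> (C v' - C vs))"
  proof
    fix v'
    have id: "M us + C v' - d = C v' - C vs" using Cvs by (simp add: algebra_simps)
    have "ereal P \<le> ereal Fs + g v' + ereal ((C v' - C vs) \<bullet> zs)" using Pmin[of us v'] Fs unfolding id by simp
    then show "g vs \<le> g v' + ereal (zs \<bullet> (C v' - C vs))"
      using Gs gnp by (cases "g v'") (auto simp: P_def inner_commute)
  qed
  have S1: "- M us \<in> subdiff (h1_fun f M) zs"
    using conj_subdiff[OF lin(1) fnp _ fsubs, where e=0] Fs unfolding h1eq by simp
  have S2: "M us \<in> subdiff (h2_fun g C d) zs"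
    using conj_subdiff[OF lin(2) gnp _ gsubs, where e=d] Gs Cvs unfolding h2eq by simp

  have fej: "(norm (z (Suc n) - \<zeta>))\<^sup>2 + (norm (w (Suc n) - \<omega>))\<^sup>2 + \<kappa> * e n \<le> (norm (z n - \<zeta>))\<^sup>2 + (norm (w n - \<omega>))\<^sup>2"
    if S: "- \<omega> \<in> subdiff (h1_fun f M) \<zeta>" "\<omega> \<in> subdiff (h2_fun g C d) \<zeta>" for n \<zeta> \<omega>
  proof -
    have m1: "(b (Suc n) - \<omega>) \<bullet> (x (Suc n) - \<zeta>) \<ge> 0" by (rule subdiff_mono[OF bsub S(2)])
    have m2: "(a (Suc n) - - \<omega>) \<bullet> (y (Suc n) - \<zeta>) \<ge> 0" by (rule subdiff_mono[OF asub S(1)])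
    have "(norm (z (Suc n) - \<zeta>))\<^sup>2 + (norm (w (Suc n) - \<omega>))\<^sup>2
         + (1 - rhobar\<^sup>2) * (lam\<^sup>2 / (4 * (2 + lam\<^sup>2))) * ((norm (d - C (v (Suc n)) - w n))\<^sup>2 + (norm (w n - M (u (Suc n))))\<^sup>2)
         \<le> (norm (z n - \<zeta>))\<^sup>2 + (norm (w n - \<omega>))\<^sup>2"
    proof (rule fejer_vec[OF lam_pos rhobar rho1 rho2 stop gam zup wup])
      show "(d - C (v (Suc n)) - \<omega>) \<bullet> (z n + lam *\<^sub>R w n + lam *\<^sub>R (C (v (Suc n)) - d) - \<zeta>) \<ge> 0"
        using m1 by (simp add: b_def x_def)
      show "(- M (u (Suc n)) - - \<omega>) \<bullet> (z n + lam *\<^sub>R w n + lam *\<^sub>R (C (v (Suc n)) - d) - lam *\<^sub>R (w n - M (u (Suc n))) - \<zeta>) \<ge> 0"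
        using m2 by (simp add: a_def y_def)
    qed
    then show ?thesis by (simp add: \<kappa>_def e_def s_def t_def)
  qed

  define D0 where "D0 n = (norm (z n - zs))\<^sup>2 + (norm (w n - M us))\<^sup>2" for n
  have D0step: "D0 (Suc n) + \<kappa> * e n \<le> D0 n" for n
    unfolding D0_def using fej[OF S1 S2, of n] by simp
  have e0: "e n \<ge> 0" for n by (simp add: e_def)
  have D0nn: "D0 n \<ge> 0" for n by (simp add: D0_def)
  have D0dec: "D0 (Suc n) \<le> D0 n" for n using D0step[of n] e0[of n] kpos
    by (smt (verit) mult_nonneg_nonneg)
  have D0le: "D0 n \<le> D0 0" for n
    by (induction n) (use D0dec order_trans in auto)
  have sumb: "(\<Sum>i<N. \<kappa> * e i) \<le> D0 0 - D0 N" for N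
  proof (induction N)
    case 0 then show ?case by simp
  next
    case (Suc N) then show ?case using D0step[of N] by simp
  qed
  have "summable (\<lambda>i. \<kappa> * e i)"
  proof (rule summableI_nonneg_bounded[where x="D0 0"])
    show "0 \<le> \<kappa> * e n" for n using kpos e0[of n] by simp
    show "(\<Sum>i<N. \<kappa> * e i) \<le> D0 0" for N using sumb[of N] D0nn[of N] by simp
  qed
  then have "(\<lambda>i. \<kappa> * e i) \<longlonglongrightarrow> 0" by (rule summable_LIMSEQ_zero)
  then have "(\<lambda>i. (1 / \<kappa>) * (\<kappa> * e i)) \<longlonglongrightarrow> (1 / \<kappa>) * 0" by (intro tendsto_intros)
  then have elim: "e \<longlonglongrightarrow> 0" using kpos by simp
  have sqe: "(\<lambda>n. sqrt (e n)) \<longlonglongrightarrow> 0" using tendsto_real_sqrt[OF elim] by simp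
  have slim: "s \<longlonglongrightarrow> 0"
  proof (rule Lim_null_comparison[OF _ sqe])
    show "\<forall>\<^sub>F n in sequentially. norm (s n) \<le> sqrt (e n)"
      by (intro always_eventually allI real_le_rsqrt) (simp add: e_def)
  qed
  have tlim: "t \<longlonglongrightarrow> 0"
  proof (rule Lim_null_comparison[OF _ sqe])
    show "\<forall>\<^sub>F n in sequentially. norm (t n) \<le> sqrt (e n)"
      by (intro always_eventually allI real_le_rsqrt) (simp add: e_def)
  qed
  define p where "p n = (z n, w n)" for n
  have "range p \<subseteq> cball (zs, M us) (sqrt (D0 0))"
  proof
    fix q assume "q \<in> range p"
    then obtain n where q: "q = p n" by auto
    have "dist (zs, M us) (p n) = sqrt (D0 n)"
      by (simp add: p_def D0_def dist_norm norm_Pair norm_minus_commute)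
    also have "\<dots> \<le> sqrt (D0 0)" using D0le by simp
    finally show "q \<in> cball (zs, M us) (sqrt (D0 0))" using q by simp
  qed
  then have "bounded (range p)" using bounded_cball bounded_subset by blast
  then obtain l r where r: "strict_mono r" and lr: "(p \<circ> r) \<longlonglongrightarrow> l"
    using bounded_imp_convergent_subsequence by blast
  obtain zb wb where l: "l = (zb, wb)" by (cases l)
  have zr: "(\<lambda>j. z (r j)) \<longlonglongrightarrow> zb" using tendsto_fst[OF lr] by (simp add: p_def o_def l)
  have wr: "(\<lambda>j. w (r j)) \<longlonglongrightarrow> wb" using tendsto_snd[OF lr] by (simp add: p_def o_def l)
  have sr: "(\<lambda>j. s (r j)) \<longlonglongrightarrow> 0" using LIMSEQ_subseq_LIMSEQ[OF slim r] by (simp add: o_def)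
  have tr: "(\<lambda>j. t (r j)) \<longlonglongrightarrow> 0" using LIMSEQ_subseq_LIMSEQ[OF tlim r] by (simp add: o_def)
  have wbS2: "wb \<in> subdiff (h2_fun g C d) zb"
  proof (rule subdiff_closed[OF lin(2) gnp vg h2eq, where s="\<lambda>j. b (Suc (r j))" and q="\<lambda>j. x (Suc (r j))"])
    show "b (Suc (r j)) \<in> subdiff (h2_fun g C d) (x (Suc (r j)))" for j by (rule bsub)
    have "(\<lambda>j. z (r j) - lam *\<^sub>R s (r j)) \<longlonglongrightarrow> zb - lam *\<^sub>R 0" by (intro tendsto_intros zr sr)
    then show "(\<lambda>j. x (Suc (r j))) \<longlonglongrightarrow> zb" by (simp add: xS)
    have "(\<lambda>j. s (r j) + w (r j)) \<longlonglongrightarrow> 0 + wb" by (intro tendsto_intros wr sr)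
    then show "(\<lambda>j. b (Suc (r j))) \<longlonglongrightarrow> wb" by (simp add: bS)
  qed
  have wbS1: "- wb \<in> subdiff (h1_fun f M) zb"
  proof (rule subdiff_closed[OF lin(1) fnp uf h1eq, where s="\<lambda>j. a (Suc (r j))" and q="\<lambda>j. y (Suc (r j))"])
    show "a (Suc (r j)) \<in> subdiff (h1_fun f M) (y (Suc (r j)))" for j by (rule asub)
    have "(\<lambda>j. z (r j) - lam *\<^sub>R (s (r j) + t (r j))) \<longlonglongrightarrow> zb - lam *\<^sub>R (0 + 0)" by (intro tendsto_intros zr sr tr)
    then show "(\<lambda>j. y (Suc (r j))) \<longlonglongrightarrow> zb" by (simp add: yS)
    have "(\<lambda>j. - (w (r j) - t (r j))) \<longlonglongrightarrow> - (wb - 0)" by (intro tendsto_intros wr tr)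
    moreover have "a (Suc k) = - (w k - t k)" for k using aS[of k] by (metis minus_minus)
    ultimately show "(\<lambda>j. a (Suc (r j))) \<longlonglongrightarrow> - wb" by simp
  qed
  define Db where "Db n = (norm (z n - zb))\<^sup>2 + (norm (w n - wb))\<^sup>2" for n
  have Dbdec: "Db (Suc n) \<le> Db n" for n
    using fej[OF wbS1 wbS2, of n] e0[of n] kpos unfolding Db_def by (smt (verit) mult_nonneg_nonneg)
  have "(\<lambda>j. Db (r j)) \<longlonglongrightarrow> (norm (zb - zb))\<^sup>2 + (norm (wb - wb))\<^sup>2"
    unfolding Db_def by (intro tendsto_intros zr wr)
  then have "(\<lambda>j. Db (r j)) \<longlonglongrightarrow> 0" by simp
  moreover have Dbnn: "Db n \<ge> 0" for n by (simp add: Db_def)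
  ultimately have Dblim: "Db \<longlonglongrightarrow> 0" using dec_sub_zero[of Db r, OF Dbdec Dbnn r] by blast
  have sqD: "(\<lambda>n. sqrt (Db n)) \<longlonglongrightarrow> 0" using tendsto_real_sqrt[OF Dblim] by simp
  have "(\<lambda>n. z n - zb) \<longlonglongrightarrow> 0"
    by (rule Lim_null_comparison[OF _ sqD], intro always_eventually allI real_le_rsqrt) (simp add: Db_def)
  then have zlim: "z \<longlonglongrightarrow> zb" by (simp add: LIM_zero_iff)
  have "(\<lambda>n. w n - wb) \<longlonglongrightarrow> 0"
    by (rule Lim_null_comparison[OF _ sqD], intro always_eventually allI real_le_rsqrt) (simp add: Db_def)
  then have wlim: "w \<longlonglongrightarrow> wb" by (simp add: LIM_zero_iff)

  have xlim: "x \<longlonglongrightarrow> zb"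
  proof (rule shiftlim)
    have "(\<lambda>n. z n - lam *\<^sub>R s n) \<longlonglongrightarrow> zb - lam *\<^sub>R 0" by (intro tendsto_intros zlim slim)
    then show "(\<lambda>n. x (Suc n)) \<longlonglongrightarrow> zb" by (simp add: xS)
  qed
  have blim: "b \<longlonglongrightarrow> wb"
  proof (rule shiftlim)
    have "(\<lambda>n. s n + w n) \<longlonglongrightarrow> 0 + wb" by (intro tendsto_intros wlim slim)
    then show "(\<lambda>n. b (Suc n)) \<longlonglongrightarrow> wb" by (simp add: bS)
  qed
  have ylim: "y \<longlonglongrightarrow> zb"
  proof (rule shiftlim)
    have "(\<lambda>n. z n - lam *\<^sub>R (s n + t n)) \<longlonglongrightarrow> zb - lam *\<^sub>R (0 + 0)" by (intro tendsto_intros zlim slim tlim)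
    then show "(\<lambda>n. y (Suc n)) \<longlonglongrightarrow> zb" by (simp add: yS)
  qed
  have alim: "(\<lambda>k. - a k) \<longlonglongrightarrow> wb"
  proof (rule shiftlim)
    have "(\<lambda>n. w n - t n) \<longlonglongrightarrow> wb - 0" by (intro tendsto_intros wlim tlim)
    then show "(\<lambda>n. - a (Suc n)) \<longlonglongrightarrow> wb" by (simp add: aS)
  qed
  have reslim: "(\<lambda>k. M (u k) + C (v k) - d) \<longlonglongrightarrow> 0"
  proof (rule shiftlim)
    have "(\<lambda>n. - (s n + t n)) \<longlonglongrightarrow> - (0 + 0)" by (intro tendsto_intros slim tlim)
    moreover have "M (u (Suc n)) + C (v (Suc n)) - d = - (s n + t n)" for n
      unfolding MuS CvS by (simp add: algebra_simps)
    ultimately show "(\<lambda>n. M (u (Suc n)) + C (v (Suc n)) - d) \<longlonglongrightarrow> 0" by simp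
  qed
  have xylim: "(\<lambda>k. x k - y k) \<longlonglongrightarrow> 0"
  proof (rule shiftlim)
    have "(\<lambda>n. lam *\<^sub>R t n) \<longlonglongrightarrow> lam *\<^sub>R 0" by (intro tendsto_intros tlim)
    moreover have "x (Suc n) - y (Suc n) = lam *\<^sub>R t n" for n
      unfolding xS yS by (simp add: algebra_simps)
    ultimately show "(\<lambda>n. x (Suc n) - y (Suc n)) \<longlonglongrightarrow> 0" by simp
  qed
  have Mulim: "(\<lambda>n. M (u (Suc n))) \<longlonglongrightarrow> wb"
  proof -
    have "(\<lambda>n. w n - t n) \<longlonglongrightarrow> wb - 0" by (intro tendsto_intros wlim tlim)
    then show ?thesis by (simp add: MuS)
  qed
  have Cvlim: "(\<lambda>n. C (v (Suc n))) \<longlonglongrightarrow> d - wb"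
  proof -
    have "(\<lambda>n. d - s n - w n) \<longlonglongrightarrow> d - 0 - wb" by (intro tendsto_intros wlim slim)
    then show ?thesis by (simp add: CvS)
  qed
  have xSlim: "(\<lambda>n. x (Suc n)) \<longlonglongrightarrow> zb" by (rule LIMSEQ_Suc[OF xlim])
  have ySlim: "(\<lambda>n. y (Suc n)) \<longlonglongrightarrow> zb" by (rule LIMSEQ_Suc[OF ylim])

  define F where "F n = real_of_ereal (f (u (Suc n)))" for n
  define G where "G n = real_of_ereal (g (v (Suc n)))" for n
  have fF: "f (u (Suc n)) = ereal (F n)" for n using ffin[of n] fnp unfolding F_def by (cases "f (u (Suc n))") auto
  have gG: "g (v (Suc n)) = ereal (G n)" for n using gfin[of n] gnp unfolding G_def by (cases "g (v (Suc n))") auto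
  have Fle: "F n \<le> Fu + y (Suc n) \<bullet> (M u' - M (u (Suc n)))" if "f u' = ereal Fu" for n u' Fu
    using fsub[of n, THEN spec, of u'] fF[of n] that by simp
  have Gle: "G n \<le> Gv + x (Suc n) \<bullet> (C v' - C (v (Suc n)))" if "g v' = ereal Gv" for n v' Gv
    using gsub[of n, THEN spec, of v'] gG[of n] that by simp

  have FGlim: "(\<lambda>n. F n + G n) \<longlonglongrightarrow> P"
  proof (rule tendsto_sandwich[where f="\<lambda>n. P - (M (u (Suc n)) + C (v (Suc n)) - d) \<bullet> zs"
        and h="\<lambda>n. P + y (Suc n) \<bullet> (M us - M (u (Suc n))) + x (Suc n) \<bullet> (C vs - C (v (Suc n)))"])
    show "\<forall>\<^sub>F n in sequentially. P - (M (u (Suc n)) + C (v (Suc n)) - d) \<bullet> zs \<le> F n + G n"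
    proof (intro always_eventually allI)
      fix n show "P - (M (u (Suc n)) + C (v (Suc n)) - d) \<bullet> zs \<le> F n + G n"
        using Pmin[of "u (Suc n)" "v (Suc n)"] fF[of n] gG[of n] by simp
    qed
    show "\<forall>\<^sub>F n in sequentially. F n + G n \<le> P + y (Suc n) \<bullet> (M us - M (u (Suc n))) + x (Suc n) \<bullet> (C vs - C (v (Suc n)))"
    proof (intro always_eventually allI)
      fix n show "F n + G n \<le> P + y (Suc n) \<bullet> (M us - M (u (Suc n))) + x (Suc n) \<bullet> (C vs - C (v (Suc n)))"
        using Fle[OF Fs, of n] Gle[OF Gs, of n] by (simp add: P_def)
    qed
    have "(\<lambda>n. P - (M (u (Suc n)) + C (v (Suc n)) - d) \<bullet> zs) \<longlonglongrightarrow> P - 0 \<bullet> zs"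
      by (intro tendsto_intros LIMSEQ_Suc[OF reslim])
    then show "(\<lambda>n. P - (M (u (Suc n)) + C (v (Suc n)) - d) \<bullet> zs) \<longlonglongrightarrow> P" by simp
    have "(\<lambda>n. P + y (Suc n) \<bullet> (M us - M (u (Suc n))) + x (Suc n) \<bullet> (C vs - C (v (Suc n))))
          \<longlonglongrightarrow> P + zb \<bullet> (M us - wb) + zb \<bullet> (C vs - (d - wb))"
      by (intro tendsto_intros xSlim ySlim Mulim Cvlim)
    moreover have "P + zb \<bullet> (M us - wb) + zb \<bullet> (C vs - (d - wb)) = P"
      unfolding Cvs by (simp add: inner_diff_right inner_add_right algebra_simps)
    ultimately show "(\<lambda>n. P + y (Suc n) \<bullet> (M us - M (u (Suc n))) + x (Suc n) \<bullet> (C vs - C (v (Suc n)))) \<longlonglongrightarrow> P"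
      by simp
  qed
  have primal: "primal_value f g M C d = ereal P"
    unfolding primal_value_def
  proof (rule antisym)
    show "(INF p\<in>{(u, v). M u + C v = d}. f (fst p) + g (snd p)) \<le> ereal P"
      by (rule INF_lower2[of "(us, vs)"]) (use feas Fs Gs P_def in auto)
    show "ereal P \<le> (INF p\<in>{(u, v). M u + C v = d}. f (fst p) + g (snd p))"
    proof (rule INF_greatest)
      fix pp assume "pp \<in> {(u, v). M u + C v = d}"
      then show "ereal P \<le> f (fst pp) + g (snd pp)" using Pmin[of "fst pp" "snd pp"] by auto
    qed
  qed
  have clim: "(\<lambda>k. f (u k) + g (v k)) \<longlonglongrightarrow> primal_value f g M C d"
    unfolding primal
  proof (rule shiftlim)
    show "(\<lambda>n. f (u (Suc n)) + g (v (Suc n))) \<longlonglongrightarrow> ereal P"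
      using tendsto_ereal[OF FGlim] by (simp add: fF gG)
  qed
  have dual: "is_dual_solution f g M C d zb"
    unfolding is_dual_solution_def
  proof
    fix z'
    have "dual_fun f g M C d z' \<le> ereal P"
      unfolding dual_fun_def by (rule INF_lower2[of "(us, vs)"]) (auto simp: lagr_eq)
    also have "ereal P \<le> dual_fun f g M C d zb"
      unfolding dual_fun_def
    proof (rule INF_greatest)
      fix pp :: "'a \<times> 'b"
      obtain u' v' where pp: "pp = (u', v')" by (cases pp)
      show "ereal P \<le> lagr f g M C d (fst pp) (snd pp) zb"
      proof (cases "f u' = \<infinity> \<or> g v' = \<infinity>")
        case True
        then have "lagr f g M C d u' v' zb = \<infinity>" using fnp gnp
          by (cases "f u'"; cases "g v'") (auto simp: lagr_def)
        then show ?thesis using pp by simp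
      next
        case False
        then obtain Fu Gv where Fu: "f u' = ereal Fu" and Gv: "g v' = ereal Gv" using fnp gnp
          by (cases "f u'"; cases "g v'") auto
        have le: "F n + G n - y (Suc n) \<bullet> (M u' - M (u (Suc n))) - x (Suc n) \<bullet> (C v' - C (v (Suc n))) \<le> Fu + Gv" for n
          using Fle[OF Fu, of n] Gle[OF Gv, of n] by simp
        have "(\<lambda>n. F n + G n - y (Suc n) \<bullet> (M u' - M (u (Suc n))) - x (Suc n) \<bullet> (C v' - C (v (Suc n))))
              \<longlonglongrightarrow> P - zb \<bullet> (M u' - wb) - zb \<bullet> (C v' - (d - wb))"
          by (intro tendsto_intros FGlim xSlim ySlim Mulim Cvlim)
        then have "P - zb \<bullet> (M u' - wb) - zb \<bullet> (C v' - (d - wb)) \<le> Fu + Gv"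
          by (rule LIMSEQ_le_const2) (use le in auto)
        then have "P \<le> Fu + Gv + (M u' + C v' - d) \<bullet> zb"
          by (simp add: inner_diff_right inner_add_right inner_diff_left inner_add_left inner_commute algebra_simps)
        then show ?thesis using pp Fu Gv by (simp add: lagr_def)
      qed
    qed
    finally show "dual_fun f g M C d z' \<le> dual_fun f g M C d zb" .
  qed
  show ?thesis
    apply (intro conjI)
       apply (rule exI[where x=zb], rule exI[where x=wb])
    using dual wbS1 wbS2 xlim blim ylim alim zlim wlim reslim xylim clim
    by (auto intro!: tendsto_Pair)
qed

end
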